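(* Let $T$ be a triangle of type $(120^\circ,30^\circ,30^\circ)$. Then $h(n,T)\le\frac{4}{81}n^3$ for every positive integer $n$.
   Context: A triangle is of type $(\alpha,\beta,\gamma)$ if $\alpha\ge\beta\ge\gamma$ are its interior angles in degrees. For a triangle $T$ with side lengths $a,b,c$ and $\varepsilon>0$, with $\varepsilon'=\varepsilon\min\{a,b,c\}$, a triangle $A'B'C'$ is $\varepsilon$-congruent to $T$ if there are $A,B,C\in\mathbb{R}^2$ with $ABC$ congruent to $T$ and $A',B',C'$ within distance $\varepsilon'$ of $A,B,C$ respectively. $h(n,T,\varepsilon)$ is the maximum over $n$-point sets $P\subseteq\mathbb{R}^2$ of the number of 3-subsets of $P$ forming triangles $\varepsilon$-congruent to $T$, and $h(n,T)=\min_{\varepsilon>0}h(n,T,\varepsilon)$. *)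

theory Defs
  imports "HOL-Analysis.Analysis" "HOL-Library.Multiset"
begin

type_synonym point = "real^2"
type_synonym triangle = "point \<times> point \<times> point"

definition angle_deg :: "point \<Rightarrow> point \<Rightarrow> point \<Rightarrow> real" where
  "angle_deg A B C =
     arccos (((B - A) \<bullet> (C - A)) / (norm (B - A) * norm (C - A))) * 180 / pi"

definition tri_type :: "triangle \<Rightarrow> real \<Rightarrow> real \<Rightarrow> real \<Rightarrow> bool" where
  "tri_type T \<alpha> \<beta> \<gamma> \<longleftrightarrow>
     (case T of (A, B, C) \<Rightarrow>
        \<not> collinear {A, B, C} \<and> \<alpha> \<ge> \<beta> \<and> \<beta> \<ge> \<gamma> \<and>
        {# angle_deg A B C, angle_deg B C A, angle_deg C A B #} = {# \<alpha>, \<beta>, \<gamma> #})"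

definition congruent_to :: "point \<Rightarrow> point \<Rightarrow> point \<Rightarrow> triangle \<Rightarrow> bool" where
  "congruent_to A B C T \<longleftrightarrow>
     (case T of (A0, B0, C0) \<Rightarrow>
        dist A B = dist A0 B0 \<and> dist B C = dist B0 C0 \<and> dist C A = dist C0 A0)"

definition min_side :: "triangle \<Rightarrow> real" where
  "min_side T = (case T of (A0, B0, C0) \<Rightarrow> min (dist B0 C0) (min (dist C0 A0) (dist A0 B0)))"

definition eps_congruent :: "real \<Rightarrow> point \<Rightarrow> point \<Rightarrow> point \<Rightarrow> triangle \<Rightarrow> bool" where
  "eps_congruent \<epsilon> A' B' C' T \<longleftrightarrow>
     (\<exists>A B C. congruent_to A B C T \<and>
        dist A' A \<le> \<epsilon> * min_side T \<and> dist B' B \<le> \<epsilon> * min_side T \<and>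
        dist C' C \<le> \<epsilon> * min_side T)"

definition count_eps :: "triangle \<Rightarrow> real \<Rightarrow> point set \<Rightarrow> nat" where
  "count_eps T \<epsilon> P = card {S. S \<subseteq> P \<and> card S = 3 \<and>
      (\<exists>A' B' C'. S = {A', B', C'} \<and> eps_congruent \<epsilon> A' B' C' T)}"

definition h_eps :: "nat \<Rightarrow> triangle \<Rightarrow> real \<Rightarrow> nat" where
  "h_eps n T \<epsilon> = Max {count_eps T \<epsilon> P | P. finite P \<and> card P = n}"

definition h :: "nat \<Rightarrow> triangle \<Rightarrow> nat" where
  "h n T = Inf {h_eps n T \<epsilon> | \<epsilon>. \<epsilon> > 0}"

end

theory Submission
  imports Defs
begin



definition det3 :: "real \<Rightarrow> real \<Rightarrow> real \<Rightarrow> real \<Rightarrow> real \<Rightarrow> real \<Rightarrow> real \<Rightarrow> real \<Rightarrow> real \<Rightarrow> real" where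
  "det3 a11 a12 a13 a21 a22 a23 a31 a32 a33 = a11*(a22*a33 - a23*a32) - a12*(a21*a33 - a23*a31) + a13*(a21*a32 - a22*a31)"

lemma det3_gram_zero:
  fixes u1 u2 u3 w1 w2 w3 :: "real^2"
  shows "det3 (u1\<bullet>w1) (u1\<bullet>w2) (u1\<bullet>w3) (u2\<bullet>w1) (u2\<bullet>w2) (u2\<bullet>w3) (u3\<bullet>w1) (u3\<bullet>w2) (u3\<bullet>w3) = 0"
  unfolding det3_def inner_vec_def sum_2 by (simp add: algebra_simps)

lemma inner_dist:
  fixes a b c :: "real^2"
  shows "(b - a) \<bullet> (c - a) = ((dist a b)^2 + (dist a c)^2 - (dist b c)^2) / 2"
  unfolding dist_norm power2_norm_eq_inner by (simp add: inner_diff algebra_simps inner_commute)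



lemma prod3_pert:
  fixes x y z x' y' z' M eta :: real
  assumes "\<bar>x\<bar> \<le> M" "\<bar>y\<bar> \<le> M" "\<bar>z\<bar> \<le> M" "\<bar>x'\<bar> \<le> M" "\<bar>y'\<bar> \<le> M" "\<bar>z'\<bar> \<le> M"
    "\<bar>x - x'\<bar> \<le> eta" "\<bar>y - y'\<bar> \<le> eta" "\<bar>z - z'\<bar> \<le> eta"
  shows "\<bar>x*y*z - x'*y'*z'\<bar> \<le> 3*M^2*eta"
proof -
  have e: "x*y*z - x'*y'*z' = (x-x')*y*z + x'*(y-y')*z + x'*y'*(z-z')" by (simp add: algebra_simps)
  have M0: "0 \<le> M" using assms(1) by linarith
  have h1: "\<bar>(x-x')*y*z\<bar> \<le> eta*M*M"
    unfolding abs_mult by (intro mult_mono) (use assms M0 in auto)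
  have h2: "\<bar>x'*(y-y')*z\<bar> \<le> M*eta*M"
    unfolding abs_mult by (intro mult_mono) (use assms M0 in auto)
  have h3: "\<bar>x'*y'*(z-z')\<bar> \<le> M*M*eta"
    unfolding abs_mult by (intro mult_mono) (use assms M0 in auto)
  show ?thesis unfolding e using h1 h2 h3 by (simp add: power2_eq_square algebra_simps)
qed

lemma det3_pert:
  fixes M eta :: real
  assumes "\<bar>a11\<bar> \<le> M" "\<bar>a12\<bar> \<le> M" "\<bar>a13\<bar> \<le> M" "\<bar>a21\<bar> \<le> M" "\<bar>a22\<bar> \<le> M" "\<bar>a23\<bar> \<le> M" "\<bar>a31\<bar> \<le> M" "\<bar>a32\<bar> \<le> M" "\<bar>a33\<bar> \<le> M"
    "\<bar>b11\<bar> \<le> M" "\<bar>b12\<bar> \<le> M" "\<bar>b13\<bar> \<le> M" "\<bar>b21\<bar> \<le> M" "\<bar>b22\<bar> \<le> M" "\<bar>b23\<bar> \<le> M" "\<bar>b31\<bar> \<le> M" "\<bar>b32\<bar> \<le> M" "\<bar>b33\<bar> \<le> M"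
    "\<bar>a11-b11\<bar> \<le> eta" "\<bar>a12-b12\<bar> \<le> eta" "\<bar>a13-b13\<bar> \<le> eta" "\<bar>a21-b21\<bar> \<le> eta" "\<bar>a22-b22\<bar> \<le> eta" "\<bar>a23-b23\<bar> \<le> eta" "\<bar>a31-b31\<bar> \<le> eta" "\<bar>a32-b32\<bar> \<le> eta" "\<bar>a33-b33\<bar> \<le> eta"
  shows "\<bar>det3 a11 a12 a13 a21 a22 a23 a31 a32 a33 - det3 b11 b12 b13 b21 b22 b23 b31 b32 b33\<bar> \<le> 18*M^2*eta"
proof -
  have e: "det3 a11 a12 a13 a21 a22 a23 a31 a32 a33 - det3 b11 b12 b13 b21 b22 b23 b31 b32 b33 =
    (a11*a22*a33 - b11*b22*b33) - (a11*a23*a32 - b11*b23*b32) - (a12*a21*a33 - b12*b21*b33)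
    + (a12*a23*a31 - b12*b23*b31) + (a13*a21*a32 - b13*b21*b32) - (a13*a22*a31 - b13*b22*b31)"
    unfolding det3_def by (simp add: algebra_simps)
  have "\<bar>a11*a22*a33 - b11*b22*b33\<bar> \<le> 3*M^2*eta" by (rule prod3_pert[OF assms(1) assms(5) assms(9) assms(10) assms(14) assms(18) assms(19) assms(23) assms(27)])
  moreover have "\<bar>a11*a23*a32 - b11*b23*b32\<bar> \<le> 3*M^2*eta" by (rule prod3_pert[OF assms(1) assms(6) assms(8) assms(10) assms(15) assms(17) assms(19) assms(24) assms(26)])
  moreover have "\<bar>a12*a21*a33 - b12*b21*b33\<bar> \<le> 3*M^2*eta" by (rule prod3_pert[OF assms(2) assms(4) assms(9) assms(11) assms(13) assms(18) assms(20) assms(22) assms(27)])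
  moreover have "\<bar>a12*a23*a31 - b12*b23*b31\<bar> \<le> 3*M^2*eta" by (rule prod3_pert[OF assms(2) assms(6) assms(7) assms(11) assms(15) assms(16) assms(20) assms(24) assms(25)])
  moreover have "\<bar>a13*a21*a32 - b13*b21*b32\<bar> \<le> 3*M^2*eta" by (rule prod3_pert[OF assms(3) assms(4) assms(8) assms(12) assms(13) assms(17) assms(21) assms(22) assms(26)])
  moreover have "\<bar>a13*a22*a31 - b13*b22*b31\<bar> \<le> 3*M^2*eta" by (rule prod3_pert[OF assms(3) assms(5) assms(7) assms(12) assms(14) assms(16) assms(21) assms(23) assms(25)])
  ultimately show ?thesis unfolding e by linarith
qed




definition nS :: "real^2 \<Rightarrow> real^2 \<Rightarrow> bool" where
  "nS x y \<longleftrightarrow> \<bar>dist x y - 1\<bar> \<le> 1/20000"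
definition nL :: "real^2 \<Rightarrow> real^2 \<Rightarrow> bool" where
  "nL x y \<longleftrightarrow> \<bar>dist x y - sqrt 3\<bar> \<le> 1/20000"
definition EE :: "bool \<Rightarrow> real" where "EE b = (if b then 1 else 3)"

lemma sqrt3_bounds: "(173/100) < sqrt (3::real)" "sqrt (3::real) < (174/100)"
proof -
  show "(173/100) < sqrt (3::real)" by (rule real_less_rsqrt) (simp add: power2_eq_square)
  show "sqrt (3::real) < (174/100)" by (rule real_less_lsqrt) (simp_all add: power2_eq_square)
qed

lemma nS_nL_excl: "nS x y \<Longrightarrow> nL x y \<Longrightarrow> False"
  using sqrt3_bounds unfolding nS_def nL_def abs_le_iff by linarith

lemma nS_sym: "nS x y = nS y x" unfolding nS_def by (simp add: dist_commute)
lemma nL_sym: "nL x y = nL y x" unfolding nL_def by (simp add: dist_commute)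

lemma sq_approx:
  assumes "nS x y \<or> nL x y"
  shows "\<bar>(dist x y)^2 - EE (nS x y)\<bar> \<le> 1/5000"
proof (cases "nS x y")
  case True
  then have h: "\<bar>dist x y - 1\<bar> \<le> 1/20000" by (simp add: nS_def)
  have e: "(dist x y)^2 - 1 = (dist x y - 1) * (dist x y + 1)" by (simp add: power2_eq_square algebra_simps)
  have d: "dist x y \<le> 2" using h unfolding abs_le_iff by linarith
  have b: "\<bar>(dist x y - 1) * (dist x y + 1)\<bar> \<le> (1/20000) * 3"
    unfolding abs_mult by (intro mult_mono) (use h d in auto)
  have "\<bar>(dist x y)^2 - 1\<bar> \<le> (1/20000) * 3" by (subst e) (rule b)
  then show ?thesis using True by (simp add: EE_def)
next
  case False
  then have h: "\<bar>dist x y - sqrt 3\<bar> \<le> 1/20000" using assms by (simp add: nL_def)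
  have e: "(dist x y)^2 - 3 = (dist x y - sqrt 3) * (dist x y + sqrt 3)" by (simp add: power2_eq_square algebra_simps)
  have b: "\<bar>(dist x y - sqrt 3) * (dist x y + sqrt 3)\<bar> \<le> (1/20000) * 4"
    unfolding abs_mult proof (intro mult_mono)
    have "dist x y \<le> 2" using h sqrt3_bounds unfolding abs_le_iff by linarith
    then show "\<bar>dist x y + sqrt 3\<bar> \<le> 4" using sqrt3_bounds by auto
  qed (use h in auto)
  have "\<bar>(dist x y)^2 - 3\<bar> \<le> (1/20000) * 4" by (subst e) (rule b)
  then show ?thesis using False by (simp add: EE_def)
qed

lemma lin3: "\<bar>(A::real) - ea\<bar> \<le> 1/5000 \<Longrightarrow> \<bar>B - eb\<bar> \<le> 1/5000 \<Longrightarrow> \<bar>C - ec\<bar> \<le> 1/5000 \<Longrightarrow>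
  \<bar>(A + B - C)/2 - (ea + eb - ec)/2\<bar> \<le> (3/10000::real)"
  unfolding abs_le_iff by (auto simp: field_simps)

lemma gram_entry:
  assumes "nS a b \<or> nL a b" "nS a c \<or> nL a c" "nS b c \<or> nL b c"
  shows "\<bar>(b - a) \<bullet> (c - a) - (EE (nS a b) + EE (nS a c) - EE (nS b c))/2\<bar> \<le> 3/10000"
  unfolding inner_dist by (rule lin3[OF sq_approx[OF assms(1)] sq_approx[OF assms(2)] sq_approx[OF assms(3)]])

lemma gram_diag:
  assumes "nS a b \<or> nL a b"
  shows "\<bar>(b - a) \<bullet> (b - a) - EE (nS a b)\<bar> \<le> 3/10000"
  using sq_approx[OF assms(1)] unfolding inner_dist by (simp add: dist_commute)

lemma EE_bnd: "\<bar>EE b\<bar> \<le> 3" "\<bar>(EE b1 + EE b2 - EE b3)/2\<bar> \<le> 3" by (auto simp: EE_def)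

lemma bnd4: "\<bar>a - e\<bar> \<le> 3/10000 \<Longrightarrow> \<bar>e\<bar> \<le> 3 \<Longrightarrow> \<bar>a::real\<bar> \<le> 4" by linarith
lemma bnd4': "\<bar>e\<bar> \<le> 3 \<Longrightarrow> \<bar>e::real\<bar> \<le> 4" by linarith

lemma det_small:
  fixes u1 u2 u3 w1 w2 w3 :: "real^2"
  assumes "\<bar>u1\<bullet>w1 - e11\<bar> \<le> 3/10000" "\<bar>u1\<bullet>w2 - e12\<bar> \<le> 3/10000" "\<bar>u1\<bullet>w3 - e13\<bar> \<le> 3/10000"
    "\<bar>u2\<bullet>w1 - e21\<bar> \<le> 3/10000" "\<bar>u2\<bullet>w2 - e22\<bar> \<le> 3/10000" "\<bar>u2\<bullet>w3 - e23\<bar> \<le> 3/10000"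
    "\<bar>u3\<bullet>w1 - e31\<bar> \<le> 3/10000" "\<bar>u3\<bullet>w2 - e32\<bar> \<le> 3/10000" "\<bar>u3\<bullet>w3 - e33\<bar> \<le> 3/10000"
    "\<bar>e11\<bar> \<le> 3" "\<bar>e12\<bar> \<le> 3" "\<bar>e13\<bar> \<le> 3" "\<bar>e21\<bar> \<le> 3" "\<bar>e22\<bar> \<le> 3" "\<bar>e23\<bar> \<le> 3" "\<bar>e31\<bar> \<le> 3" "\<bar>e32\<bar> \<le> 3" "\<bar>e33\<bar> \<le> 3"
  shows "\<bar>det3 e11 e12 e13 e21 e22 e23 e31 e32 e33\<bar> \<le> (864/10000)"
proof -
  have "\<bar>det3 (u1\<bullet>w1) (u1\<bullet>w2) (u1\<bullet>w3) (u2\<bullet>w1) (u2\<bullet>w2) (u2\<bullet>w3) (u3\<bullet>w1) (u3\<bullet>w2) (u3\<bullet>w3)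
        - det3 e11 e12 e13 e21 e22 e23 e31 e32 e33\<bar> \<le> 18*4^2*(3/10000)"
    by (rule det3_pert[OF bnd4[OF assms(1) assms(10)] bnd4[OF assms(2) assms(11)] bnd4[OF assms(3) assms(12)] bnd4[OF assms(4) assms(13)] bnd4[OF assms(5) assms(14)] bnd4[OF assms(6) assms(15)] bnd4[OF assms(7) assms(16)] bnd4[OF assms(8) assms(17)] bnd4[OF assms(9) assms(18)] bnd4'[OF assms(10)] bnd4'[OF assms(11)] bnd4'[OF assms(12)] bnd4'[OF assms(13)] bnd4'[OF assms(14)] bnd4'[OF assms(15)] bnd4'[OF assms(16)] bnd4'[OF assms(17)] bnd4'[OF assms(18)] assms(1-9)])
  then show ?thesis unfolding det3_gram_zero by simp
qed


definition cm_ok :: "bool \<Rightarrow> bool \<Rightarrow> bool \<Rightarrow> bool \<Rightarrow> bool \<Rightarrow> bool \<Rightarrow> bool" where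
  "cm_ok l01 l02 l03 l12 l13 l23 \<longleftrightarrow>
     (\<not>l01 \<and> l02 \<and> l03 \<and> l12 \<and> l13 \<and> l23) \<or> (l01 \<and> \<not>l02 \<and> l03 \<and> l12 \<and> l13 \<and> l23) \<or>
     (l01 \<and> l02 \<and> \<not>l03 \<and> l12 \<and> l13 \<and> l23) \<or> (l01 \<and> l02 \<and> l03 \<and> \<not>l12 \<and> l13 \<and> l23) \<or>
     (l01 \<and> l02 \<and> l03 \<and> l12 \<and> \<not>l13 \<and> l23) \<or> (l01 \<and> l02 \<and> l03 \<and> l12 \<and> l13 \<and> \<not>l23) \<or>
     (l01 \<and> l02 \<and> l03 \<and> \<not>l12 \<and> \<not>l13 \<and> \<not>l23) \<or> (l01 \<and> \<not>l02 \<and> \<not>l03 \<and> l12 \<and> l13 \<and> \<not>l23) \<or>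
     (\<not>l01 \<and> l02 \<and> \<not>l03 \<and> l12 \<and> \<not>l13 \<and> l23) \<or> (\<not>l01 \<and> \<not>l02 \<and> l03 \<and> \<not>l12 \<and> l13 \<and> l23)"

lemma cm_num:
  assumes "\<bar>det3 (EE l01) ((EE l01 + EE l02 - EE l12)/2) ((EE l01 + EE l03 - EE l13)/2)
     ((EE l02 + EE l01 - EE l12)/2) (EE l02) ((EE l02 + EE l03 - EE l23)/2)
     ((EE l03 + EE l01 - EE l13)/2) ((EE l03 + EE l02 - EE l23)/2) (EE l03)\<bar> \<le> 864/10000"
  shows "cm_ok l01 l02 l03 l12 l13 l23"
  using assms
  by (cases l01; cases l02; cases l03; cases l12; cases l13; cases l23; simp add: det3_def EE_def cm_ok_def)

lemma P_sym: "nS a b \<or> nL a b \<Longrightarrow> nS b a \<or> nL b a" using nS_sym nL_sym by blast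

lemma four:
  assumes "nS p0 p1 \<or> nL p0 p1" "nS p0 p2 \<or> nL p0 p2" "nS p0 p3 \<or> nL p0 p3"
    "nS p1 p2 \<or> nL p1 p2" "nS p1 p3 \<or> nL p1 p3" "nS p2 p3 \<or> nL p2 p3"
  shows "cm_ok (nS p0 p1) (nS p0 p2) (nS p0 p3) (nS p1 p2) (nS p1 p3) (nS p2 p3)"
proof -
  note Ps = assms P_sym[OF assms(4)] P_sym[OF assms(5)] P_sym[OF assms(6)]
  have s: "nS p2 p1 = nS p1 p2" "nS p3 p1 = nS p1 p3" "nS p3 p2 = nS p2 p3" using nS_sym by auto
  have d1: "\<bar>(p1 - p0) \<bullet> (p1 - p0) - EE (nS p0 p1)\<bar> \<le> 3/10000" by (rule gram_diag) (use Ps in auto)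
  have d2: "\<bar>(p2 - p0) \<bullet> (p2 - p0) - EE (nS p0 p2)\<bar> \<le> 3/10000" by (rule gram_diag) (use Ps in auto)
  have d3: "\<bar>(p3 - p0) \<bullet> (p3 - p0) - EE (nS p0 p3)\<bar> \<le> 3/10000" by (rule gram_diag) (use Ps in auto)
  have e12: "\<bar>(p1 - p0) \<bullet> (p2 - p0) - (EE (nS p0 p1) + EE (nS p0 p2) - EE (nS p1 p2))/2\<bar> \<le> 3/10000"
    by (rule gram_entry) (use Ps in auto)
  have e13: "\<bar>(p1 - p0) \<bullet> (p3 - p0) - (EE (nS p0 p1) + EE (nS p0 p3) - EE (nS p1 p3))/2\<bar> \<le> 3/10000"
    by (rule gram_entry) (use Ps in auto)
  have e23: "\<bar>(p2 - p0) \<bullet> (p3 - p0) - (EE (nS p0 p2) + EE (nS p0 p3) - EE (nS p2 p3))/2\<bar> \<le> 3/10000"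
    by (rule gram_entry) (use Ps in auto)
  have e21: "\<bar>(p2 - p0) \<bullet> (p1 - p0) - (EE (nS p0 p2) + EE (nS p0 p1) - EE (nS p1 p2))/2\<bar> \<le> 3/10000"
    using gram_entry[of p0 p2 p1] Ps s by auto
  have e31: "\<bar>(p3 - p0) \<bullet> (p1 - p0) - (EE (nS p0 p3) + EE (nS p0 p1) - EE (nS p1 p3))/2\<bar> \<le> 3/10000"
    using gram_entry[of p0 p3 p1] Ps s by auto
  have e32: "\<bar>(p3 - p0) \<bullet> (p2 - p0) - (EE (nS p0 p3) + EE (nS p0 p2) - EE (nS p2 p3))/2\<bar> \<le> 3/10000"
    using gram_entry[of p0 p3 p2] Ps s by auto
  show ?thesis
    by (rule cm_num, rule det_small[OF d1 e12 e13 e21 d2 e23 e31 e32 d3]) (simp_all only: EE_bnd)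
qed

lemma k23:
  assumes "nS u v" "nS u x" "nS u y" "nS u z" "nS v x" "nS v y" "nS v z" "nL x y" "nL x z" "nL y z"
  shows False
proof -
  have L: "\<not> nS x y" "\<not> nS x z" "\<not> nS y z" "\<not> nS y x"
    using assms nS_nL_excl nL_sym by blast+
  note Ps = assms[THEN disjI1] assms[THEN disjI2]
  have d1: "\<bar>(v - u) \<bullet> (v - u) - EE (nS u v)\<bar> \<le> 3/10000" by (rule gram_diag) (use Ps in auto)
  have d2: "\<bar>(x - u) \<bullet> (x - u) - EE (nS u x)\<bar> \<le> 3/10000" by (rule gram_diag) (use Ps in auto)
  have e12: "\<bar>(v - u) \<bullet> (x - u) - (EE (nS u v) + EE (nS u x) - EE (nS v x))/2\<bar> \<le> 3/10000"
    by (rule gram_entry) (use Ps in auto)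
  have e14: "\<bar>(v - u) \<bullet> (z - u) - (EE (nS u v) + EE (nS u z) - EE (nS v z))/2\<bar> \<le> 3/10000"
    by (rule gram_entry) (use Ps in auto)
  have e24: "\<bar>(x - u) \<bullet> (z - u) - (EE (nS u x) + EE (nS u z) - EE (nS x z))/2\<bar> \<le> 3/10000"
    by (rule gram_entry) (use Ps in auto)
  have e34: "\<bar>(y - u) \<bullet> (z - u) - (EE (nS u y) + EE (nS u z) - EE (nS y z))/2\<bar> \<le> 3/10000"
    by (rule gram_entry) (use Ps in auto)
  have e21: "\<bar>(x - u) \<bullet> (v - u) - (EE (nS u x) + EE (nS u v) - EE (nS x v))/2\<bar> \<le> 3/10000"
    by (rule gram_entry) (use Ps P_sym in auto)
  have e31: "\<bar>(y - u) \<bullet> (v - u) - (EE (nS u y) + EE (nS u v) - EE (nS y v))/2\<bar> \<le> 3/10000"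
    by (rule gram_entry) (use Ps P_sym in auto)
  have e32: "\<bar>(y - u) \<bullet> (x - u) - (EE (nS u y) + EE (nS u x) - EE (nS y x))/2\<bar> \<le> 3/10000"
    by (rule gram_entry) (use Ps P_sym in auto)
  have "\<bar>det3 (EE (nS u v)) ((EE (nS u v) + EE (nS u x) - EE (nS v x))/2) ((EE (nS u v) + EE (nS u z) - EE (nS v z))/2)
     ((EE (nS u x) + EE (nS u v) - EE (nS x v))/2) (EE (nS u x)) ((EE (nS u x) + EE (nS u z) - EE (nS x z))/2)
     ((EE (nS u y) + EE (nS u v) - EE (nS y v))/2) ((EE (nS u y) + EE (nS u x) - EE (nS y x))/2) ((EE (nS u y) + EE (nS u z) - EE (nS y z))/2)\<bar>
     \<le> 864/10000"
    by (rule det_small[OF d1 e12 e14 e21 d2 e24 e31 e32 e34]) (simp_all only: EE_bnd)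
  moreover have "nS x v" "nS y v" using assms nS_sym by auto
  ultimately show False using assms L by (simp add: det3_def EE_def)
qed

lemma prop5:
  assumes "cm_ok l01 l02 l03 l12 l13 l23"
    "cm_ok l01 l02 l04 l12 l14 l24"
    "cm_ok l01 l03 l04 l13 l14 l34"
    "cm_ok l02 l03 l04 l23 l24 l34"
    "cm_ok l12 l13 l14 l23 l24 l34"
    "\<not>(l01 \<and> l02 \<and> l03 \<and> l04 \<and> l12 \<and> l13 \<and> l14 \<and> \<not>l23 \<and> \<not>l24 \<and> \<not>l34)"
    "\<not>(l02 \<and> l01 \<and> l03 \<and> l04 \<and> l12 \<and> l23 \<and> l24 \<and> \<not>l13 \<and> \<not>l14 \<and> \<not>l34)"
    "\<not>(l03 \<and> l01 \<and> l02 \<and> l04 \<and> l13 \<and> l23 \<and> l34 \<and> \<not>l12 \<and> \<not>l14 \<and> \<not>l24)"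
    "\<not>(l04 \<and> l01 \<and> l02 \<and> l03 \<and> l14 \<and> l24 \<and> l34 \<and> \<not>l12 \<and> \<not>l13 \<and> \<not>l23)"
    "\<not>(l12 \<and> l01 \<and> l13 \<and> l14 \<and> l02 \<and> l23 \<and> l24 \<and> \<not>l03 \<and> \<not>l04 \<and> \<not>l34)"
    "\<not>(l13 \<and> l01 \<and> l12 \<and> l14 \<and> l03 \<and> l23 \<and> l34 \<and> \<not>l02 \<and> \<not>l04 \<and> \<not>l24)"
    "\<not>(l14 \<and> l01 \<and> l12 \<and> l13 \<and> l04 \<and> l24 \<and> l34 \<and> \<not>l02 \<and> \<not>l03 \<and> \<not>l23)"
    "\<not>(l23 \<and> l02 \<and> l12 \<and> l24 \<and> l03 \<and> l13 \<and> l34 \<and> \<not>l01 \<and> \<not>l04 \<and> \<not>l14)"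
    "\<not>(l24 \<and> l02 \<and> l12 \<and> l23 \<and> l04 \<and> l14 \<and> l34 \<and> \<not>l01 \<and> \<not>l03 \<and> \<not>l13)"
    "\<not>(l34 \<and> l03 \<and> l13 \<and> l23 \<and> l04 \<and> l14 \<and> l24 \<and> \<not>l01 \<and> \<not>l02 \<and> \<not>l12)"
  shows False
  using assms unfolding cm_ok_def by (cases l01; cases l02; cases l03; cases l04; simp; smt)

lemma five:
  assumes "nS p0 p1 \<or> nL p0 p1"
    "nS p0 p2 \<or> nL p0 p2"
    "nS p0 p3 \<or> nL p0 p3"
    "nS p0 p4 \<or> nL p0 p4"
    "nS p1 p2 \<or> nL p1 p2"
    "nS p1 p3 \<or> nL p1 p3"
    "nS p1 p4 \<or> nL p1 p4"
    "nS p2 p3 \<or> nL p2 p3"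
    "nS p2 p4 \<or> nL p2 p4"
    "nS p3 p4 \<or> nL p3 p4"
  shows False
proof -
  note Ps = assms P_sym[OF assms(1)] P_sym[OF assms(2)] P_sym[OF assms(3)] P_sym[OF assms(4)] P_sym[OF assms(5)] P_sym[OF assms(6)] P_sym[OF assms(7)] P_sym[OF assms(8)] P_sym[OF assms(9)] P_sym[OF assms(10)]
  have s: "nS p1 p0 = nS p0 p1" "nS p2 p0 = nS p0 p2" "nS p3 p0 = nS p0 p3" "nS p4 p0 = nS p0 p4" "nS p2 p1 = nS p1 p2" "nS p3 p1 = nS p1 p3" "nS p4 p1 = nS p1 p4" "nS p3 p2 = nS p2 p3" "nS p4 p2 = nS p2 p4" "nS p4 p3 = nS p3 p4" using nS_sym by auto
  have c0: "cm_ok (nS p0 p1) (nS p0 p2) (nS p0 p3) (nS p1 p2) (nS p1 p3) (nS p2 p3)" by (rule four) (use Ps in auto)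
  have c1: "cm_ok (nS p0 p1) (nS p0 p2) (nS p0 p4) (nS p1 p2) (nS p1 p4) (nS p2 p4)" by (rule four) (use Ps in auto)
  have c2: "cm_ok (nS p0 p1) (nS p0 p3) (nS p0 p4) (nS p1 p3) (nS p1 p4) (nS p3 p4)" by (rule four) (use Ps in auto)
  have c3: "cm_ok (nS p0 p2) (nS p0 p3) (nS p0 p4) (nS p2 p3) (nS p2 p4) (nS p3 p4)" by (rule four) (use Ps in auto)
  have c4: "cm_ok (nS p1 p2) (nS p1 p3) (nS p1 p4) (nS p2 p3) (nS p2 p4) (nS p3 p4)" by (rule four) (use Ps in auto)
  have k0: "\<not>(nS p0 p1 \<and> nS p0 p2 \<and> nS p0 p3 \<and> nS p0 p4 \<and> nS p1 p2 \<and> nS p1 p3 \<and> nS p1 p4 \<and> \<not>nS p2 p3 \<and> \<not>nS p2 p4 \<and> \<not>nS p3 p4)"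
  proof
    assume "nS p0 p1 \<and> nS p0 p2 \<and> nS p0 p3 \<and> nS p0 p4 \<and> nS p1 p2 \<and> nS p1 p3 \<and> nS p1 p4 \<and> \<not>nS p2 p3 \<and> \<not>nS p2 p4 \<and> \<not>nS p3 p4"
    then show False using k23[of p0 p1 p2 p3 p4] Ps s nS_nL_excl by auto
  qed
  have k1: "\<not>(nS p0 p2 \<and> nS p0 p1 \<and> nS p0 p3 \<and> nS p0 p4 \<and> nS p1 p2 \<and> nS p2 p3 \<and> nS p2 p4 \<and> \<not>nS p1 p3 \<and> \<not>nS p1 p4 \<and> \<not>nS p3 p4)"
  proof
    assume "nS p0 p2 \<and> nS p0 p1 \<and> nS p0 p3 \<and> nS p0 p4 \<and> nS p1 p2 \<and> nS p2 p3 \<and> nS p2 p4 \<and> \<not>nS p1 p3 \<and> \<not>nS p1 p4 \<and> \<not>nS p3 p4"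
    then show False using k23[of p0 p2 p1 p3 p4] Ps s nS_nL_excl by auto
  qed
  have k2: "\<not>(nS p0 p3 \<and> nS p0 p1 \<and> nS p0 p2 \<and> nS p0 p4 \<and> nS p1 p3 \<and> nS p2 p3 \<and> nS p3 p4 \<and> \<not>nS p1 p2 \<and> \<not>nS p1 p4 \<and> \<not>nS p2 p4)"
  proof
    assume "nS p0 p3 \<and> nS p0 p1 \<and> nS p0 p2 \<and> nS p0 p4 \<and> nS p1 p3 \<and> nS p2 p3 \<and> nS p3 p4 \<and> \<not>nS p1 p2 \<and> \<not>nS p1 p4 \<and> \<not>nS p2 p4"
    then show False using k23[of p0 p3 p1 p2 p4] Ps s nS_nL_excl by auto
  qed
  have k3: "\<not>(nS p0 p4 \<and> nS p0 p1 \<and> nS p0 p2 \<and> nS p0 p3 \<and> nS p1 p4 \<and> nS p2 p4 \<and> nS p3 p4 \<and> \<not>nS p1 p2 \<and> \<not>nS p1 p3 \<and> \<not>nS p2 p3)"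
  proof
    assume "nS p0 p4 \<and> nS p0 p1 \<and> nS p0 p2 \<and> nS p0 p3 \<and> nS p1 p4 \<and> nS p2 p4 \<and> nS p3 p4 \<and> \<not>nS p1 p2 \<and> \<not>nS p1 p3 \<and> \<not>nS p2 p3"
    then show False using k23[of p0 p4 p1 p2 p3] Ps s nS_nL_excl by auto
  qed
  have k4: "\<not>(nS p1 p2 \<and> nS p0 p1 \<and> nS p1 p3 \<and> nS p1 p4 \<and> nS p0 p2 \<and> nS p2 p3 \<and> nS p2 p4 \<and> \<not>nS p0 p3 \<and> \<not>nS p0 p4 \<and> \<not>nS p3 p4)"
  proof
    assume "nS p1 p2 \<and> nS p0 p1 \<and> nS p1 p3 \<and> nS p1 p4 \<and> nS p0 p2 \<and> nS p2 p3 \<and> nS p2 p4 \<and> \<not>nS p0 p3 \<and> \<not>nS p0 p4 \<and> \<not>nS p3 p4"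
    then show False using k23[of p1 p2 p0 p3 p4] Ps s nS_nL_excl by auto
  qed
  have k5: "\<not>(nS p1 p3 \<and> nS p0 p1 \<and> nS p1 p2 \<and> nS p1 p4 \<and> nS p0 p3 \<and> nS p2 p3 \<and> nS p3 p4 \<and> \<not>nS p0 p2 \<and> \<not>nS p0 p4 \<and> \<not>nS p2 p4)"
  proof
    assume "nS p1 p3 \<and> nS p0 p1 \<and> nS p1 p2 \<and> nS p1 p4 \<and> nS p0 p3 \<and> nS p2 p3 \<and> nS p3 p4 \<and> \<not>nS p0 p2 \<and> \<not>nS p0 p4 \<and> \<not>nS p2 p4"
    then show False using k23[of p1 p3 p0 p2 p4] Ps s nS_nL_excl by auto
  qed
  have k6: "\<not>(nS p1 p4 \<and> nS p0 p1 \<and> nS p1 p2 \<and> nS p1 p3 \<and> nS p0 p4 \<and> nS p2 p4 \<and> nS p3 p4 \<and> \<not>nS p0 p2 \<and> \<not>nS p0 p3 \<and> \<not>nS p2 p3)"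
  proof
    assume "nS p1 p4 \<and> nS p0 p1 \<and> nS p1 p2 \<and> nS p1 p3 \<and> nS p0 p4 \<and> nS p2 p4 \<and> nS p3 p4 \<and> \<not>nS p0 p2 \<and> \<not>nS p0 p3 \<and> \<not>nS p2 p3"
    then show False using k23[of p1 p4 p0 p2 p3] Ps s nS_nL_excl by auto
  qed
  have k7: "\<not>(nS p2 p3 \<and> nS p0 p2 \<and> nS p1 p2 \<and> nS p2 p4 \<and> nS p0 p3 \<and> nS p1 p3 \<and> nS p3 p4 \<and> \<not>nS p0 p1 \<and> \<not>nS p0 p4 \<and> \<not>nS p1 p4)"
  proof
    assume "nS p2 p3 \<and> nS p0 p2 \<and> nS p1 p2 \<and> nS p2 p4 \<and> nS p0 p3 \<and> nS p1 p3 \<and> nS p3 p4 \<and> \<not>nS p0 p1 \<and> \<not>nS p0 p4 \<and> \<not>nS p1 p4"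
    then show False using k23[of p2 p3 p0 p1 p4] Ps s nS_nL_excl by auto
  qed
  have k8: "\<not>(nS p2 p4 \<and> nS p0 p2 \<and> nS p1 p2 \<and> nS p2 p3 \<and> nS p0 p4 \<and> nS p1 p4 \<and> nS p3 p4 \<and> \<not>nS p0 p1 \<and> \<not>nS p0 p3 \<and> \<not>nS p1 p3)"
  proof
    assume "nS p2 p4 \<and> nS p0 p2 \<and> nS p1 p2 \<and> nS p2 p3 \<and> nS p0 p4 \<and> nS p1 p4 \<and> nS p3 p4 \<and> \<not>nS p0 p1 \<and> \<not>nS p0 p3 \<and> \<not>nS p1 p3"
    then show False using k23[of p2 p4 p0 p1 p3] Ps s nS_nL_excl by auto
  qed
  have k9: "\<not>(nS p3 p4 \<and> nS p0 p3 \<and> nS p1 p3 \<and> nS p2 p3 \<and> nS p0 p4 \<and> nS p1 p4 \<and> nS p2 p4 \<and> \<not>nS p0 p1 \<and> \<not>nS p0 p2 \<and> \<not>nS p1 p2)"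
  proof
    assume "nS p3 p4 \<and> nS p0 p3 \<and> nS p1 p3 \<and> nS p2 p3 \<and> nS p0 p4 \<and> nS p1 p4 \<and> nS p2 p4 \<and> \<not>nS p0 p1 \<and> \<not>nS p0 p2 \<and> \<not>nS p1 p2"
    then show False using k23[of p3 p4 p0 p1 p2] Ps s nS_nL_excl by auto
  qed
  show False by (rule prop5[OF c0 c1 c2 c3 c4 k0 k1 k2 k3 k4 k5 k6 k7 k8 k9])
qed




definition fam :: "('a set \<Rightarrow> bool) \<Rightarrow> 'a set \<Rightarrow> 'a set set" where
  "fam p Q = {S. S \<subseteq> Q \<and> card S = 3 \<and> p S}"

definition FG :: "('a set \<Rightarrow> bool) \<Rightarrow> 'a set \<Rightarrow> ('a \<Rightarrow> real) \<Rightarrow> real" where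
  "FG p Q w = (\<Sum>S\<in>fam p Q. \<Prod>x\<in>S. w x)"

lemma fam_finite: "finite Q \<Longrightarrow> finite (fam p Q)"
  unfolding fam_def by (rule finite_subset[of _ "Pow Q"]) auto

lemma FG_nonneg: "(\<And>x. 0 \<le> w x) \<Longrightarrow> 0 \<le> FG p Q w"
  unfolding FG_def by (intro sum_nonneg prod_nonneg) auto

lemma shift:
  fixes w :: "'a \<Rightarrow> real"
  assumes fin: "finite Q" and xy: "x \<in> Q" "y \<in> Q" "x \<noteq> y"
    and unc: "\<not> (\<exists>S\<in>fam p Q. x \<in> S \<and> y \<in> S)" and w0: "\<And>z. 0 \<le> w z"
  shows "FG p Q w \<le> max (FG p (Q - {y}) (w(x := w x + w y))) (FG p (Q - {x}) (w(y := w x + w y)))"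
proof -
  define A0 where "A0 = {S\<in>fam p Q. x \<notin> S \<and> y \<notin> S}"
  define Ax where "Ax = {S\<in>fam p Q. x \<in> S}"
  define Ay where "Ay = {S\<in>fam p Q. y \<in> S}"
  define w1 where "w1 = w(x := w x + w y)"
  define w2 where "w2 = w(y := w x + w y)"
  have finF: "finite (fam p Q)" by (rule fam_finite[OF fin])
  have fA0: "finite A0" "finite Ax" "finite Ay" unfolding A0_def Ax_def Ay_def using finF by auto
  have famQ: "fam p Q = A0 \<union> (Ax \<union> Ay)" unfolding A0_def Ax_def Ay_def by auto
  have unc': "\<And>S. S \<subseteq> Q \<Longrightarrow> card S = 3 \<Longrightarrow> p S \<Longrightarrow> x \<in> S \<Longrightarrow> y \<in> S \<Longrightarrow> False"
    using unc unfolding fam_def by blast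
  have famy: "fam p (Q - {y}) = A0 \<union> Ax" unfolding A0_def Ax_def fam_def using unc' by blast
  have famx: "fam p (Q - {x}) = A0 \<union> Ay" unfolding A0_def Ay_def fam_def using unc' by blast
  have d1: "A0 \<inter> (Ax \<union> Ay) = {}" "A0 \<inter> Ax = {}" "A0 \<inter> Ay = {}" "Ax \<inter> Ay = {}"
    unfolding A0_def Ax_def Ay_def fam_def using unc' by blast+
  have finS: "\<And>S. S \<in> fam p Q \<Longrightarrow> finite S" unfolding fam_def using fin finite_subset by auto
  define Z where "Z = (\<Sum>S\<in>A0. \<Prod>z\<in>S. w z)"
  define \<alpha> where "\<alpha> = (\<Sum>S\<in>Ax. \<Prod>z\<in>S - {x}. w z)"
  define \<beta> where "\<beta> = (\<Sum>S\<in>Ay. \<Prod>z\<in>S - {y}. w z)"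
  have Z1: "(\<Sum>S\<in>A0. \<Prod>z\<in>S. w1 z) = Z" unfolding Z_def w1_def
    by (intro sum.cong refl prod.cong) (auto simp: A0_def)
  have Z2: "(\<Sum>S\<in>A0. \<Prod>z\<in>S. w2 z) = Z" unfolding Z_def w2_def
    by (intro sum.cong refl prod.cong) (auto simp: A0_def)
  have X: "(\<Sum>S\<in>Ax. \<Prod>z\<in>S. w z) = w x * \<alpha>" unfolding \<alpha>_def sum_distrib_left
  proof (intro sum.cong refl)
    fix S assume "S \<in> Ax"
    then have "finite S" "x \<in> S" using finS unfolding Ax_def by auto
    then show "(\<Prod>z\<in>S. w z) = w x * (\<Prod>z\<in>S - {x}. w z)" by (simp add: prod.remove)
  qed
  have X1: "(\<Sum>S\<in>Ax. \<Prod>z\<in>S. w1 z) = (w x + w y) * \<alpha>" unfolding \<alpha>_def sum_distrib_left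
  proof (intro sum.cong refl)
    fix S assume S: "S \<in> Ax"
    then have "finite S" "x \<in> S" "y \<notin> S" using finS unc unfolding Ax_def by auto
    then have "(\<Prod>z\<in>S. w1 z) = w1 x * (\<Prod>z\<in>S - {x}. w1 z)" by (simp add: prod.remove)
    also have "(\<Prod>z\<in>S - {x}. w1 z) = (\<Prod>z\<in>S - {x}. w z)" by (rule prod.cong) (auto simp: w1_def)
    finally show "(\<Prod>z\<in>S. w1 z) = (w x + w y) * (\<Prod>z\<in>S - {x}. w z)" by (simp add: w1_def)
  qed
  have Y: "(\<Sum>S\<in>Ay. \<Prod>z\<in>S. w z) = w y * \<beta>" unfolding \<beta>_def sum_distrib_left
  proof (intro sum.cong refl)
    fix S assume "S \<in> Ay"
    then have "finite S" "y \<in> S" using finS unfolding Ay_def by auto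
    then show "(\<Prod>z\<in>S. w z) = w y * (\<Prod>z\<in>S - {y}. w z)" by (simp add: prod.remove)
  qed
  have Y2: "(\<Sum>S\<in>Ay. \<Prod>z\<in>S. w2 z) = (w x + w y) * \<beta>" unfolding \<beta>_def sum_distrib_left
  proof (intro sum.cong refl)
    fix S assume S: "S \<in> Ay"
    then have "finite S" "y \<in> S" "x \<notin> S" using finS unc unfolding Ay_def by auto
    then have "(\<Prod>z\<in>S. w2 z) = w2 y * (\<Prod>z\<in>S - {y}. w2 z)" by (simp add: prod.remove)
    also have "(\<Prod>z\<in>S - {y}. w2 z) = (\<Prod>z\<in>S - {y}. w z)" by (rule prod.cong) (use \<open>x \<notin> S\<close> in \<open>auto simp: w2_def\<close>)
    finally show "(\<Prod>z\<in>S. w2 z) = (w x + w y) * (\<Prod>z\<in>S - {y}. w z)" by (simp add: w2_def)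
  qed
  have F: "FG p Q w = Z + w x * \<alpha> + w y * \<beta>"
    unfolding FG_def famQ Z_def using fA0 d1 by (simp add: sum.union_disjoint X Y)
  have F1: "FG p (Q - {y}) w1 = Z + (w x + w y) * \<alpha>"
    unfolding FG_def famy using fA0 d1 by (simp add: sum.union_disjoint X1 Z1)
  have F2: "FG p (Q - {x}) w2 = Z + (w x + w y) * \<beta>"
    unfolding FG_def famx using fA0 d1 by (simp add: sum.union_disjoint Y2 Z2)
  have "w x * \<alpha> + w y * \<beta> \<le> (w x + w y) * max \<alpha> \<beta>"
  proof -
    have "w x * \<alpha> \<le> w x * max \<alpha> \<beta>" by (rule mult_left_mono) (use w0 in auto)
    moreover have "w y * \<beta> \<le> w y * max \<alpha> \<beta>" by (rule mult_left_mono) (use w0 in auto)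
    ultimately show ?thesis by (simp add: algebra_simps)
  qed
  then have "FG p Q w \<le> max (Z + (w x + w y) * \<alpha>) (Z + (w x + w y) * \<beta>)"
    unfolding F by (cases "\<alpha> \<le> \<beta>") (auto simp: max_def)
  then show ?thesis unfolding F1[unfolded w1_def] F2[unfolded w2_def] .
qed

lemma key_ineq:
  fixes a t :: real assumes "0 \<le> a" "0 \<le> t"
  shows "27 * a * t^2 \<le> 4 * (a + t)^3"
proof -
  have "4 * (a + t)^3 - 27 * a * t^2 = (t - 2*a)^2 * (4*t + a)" by (simp add: power2_eq_square power3_eq_cube algebra_simps)
  also have "\<dots> \<ge> 0" using assms by simp
  finally show ?thesis by simp
qed

lemma star_ineq:
  fixes a b c d :: real assumes "0 \<le> a" "0 \<le> b" "0 \<le> c" "0 \<le> d"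
  shows "d * (a*b + a*c + b*c) \<le> 4/81 * (a + b + c + d)^3"
proof -
  have "a*b + a*c + b*c \<le> (a+b+c)^2 / 3"
  proof -
    have "0 \<le> (a-b)^2 + (b-c)^2 + (c-a)^2" by simp
    then show ?thesis by (simp add: power2_eq_square algebra_simps)
  qed
  then have "d * (a*b + a*c + b*c) \<le> d * ((a+b+c)^2 / 3)" by (rule mult_left_mono) (use assms in auto)
  also have "\<dots> \<le> 4/81 * (d + (a+b+c))^3" using key_ineq[of d "a+b+c"] assms by simp
  finally show ?thesis by (simp add: algebra_simps)
qed

lemma tri_ineq:
  fixes a b c :: real assumes "0 \<le> a" "0 \<le> b" "0 \<le> c"
  shows "a * b * c \<le> 4/81 * (a + b + c)^3"
proof -
  have "c * (a*b + a*0 + b*0) \<le> 4/81 * (a+b+0+c)^3" by (rule star_ineq) (use assms in auto)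
  then show ?thesis by (simp add: algebra_simps)
qed

lemma sum3_le: "(\<And>S. 0 \<le> g S) \<Longrightarrow> sum g {x, y, z} \<le> g x + g y + (g z :: real)"
  by (simp add: sum.insert_if add_increasing)

lemma base_bound:
  fixes w :: "'a \<Rightarrow> real"
  assumes fin: "finite Q" and c4: "card Q \<le> 4" and w0: "\<And>z. 0 \<le> w z"
    and nk: "card Q = 4 \<Longrightarrow> \<exists>S. S \<subseteq> Q \<and> card S = 3 \<and> \<not> p S"
  shows "FG p Q w \<le> 4/81 * (sum w Q)^3"
proof -
  have s0: "0 \<le> sum w Q" using w0 by (simp add: sum_nonneg)
  consider "card Q < 3" | "card Q = 3" | "card Q = 4" using c4 by linarith
  then show ?thesis
  proof cases
    case 1
    have "fam p Q = {}"
    proof (rule ccontr)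
      assume "fam p Q \<noteq> {}"
      then obtain S where "S \<subseteq> Q" "card S = 3" unfolding fam_def by blast
      then have "card S \<le> card Q" using card_mono fin by blast
      then show False using 1 \<open>card S = 3\<close> by simp
    qed
    then show ?thesis using s0 by (simp add: FG_def)
  next
    case 2
    then obtain a b c where Q: "Q = {a, b, c}" "a \<noteq> b" "a \<noteq> c" "b \<noteq> c" by (auto simp: card_3_iff)
    have "fam p Q \<subseteq> {Q}"
    proof
      fix S assume "S \<in> fam p Q"
      then have "S \<subseteq> Q" "card S = card Q" using 2 unfolding fam_def by auto
      then show "S \<in> {Q}" using card_subset_eq[OF fin] by blast
    qed
    then have "FG p Q w \<le> (\<Sum>S\<in>{Q}. \<Prod>z\<in>S. w z)" unfolding FG_def
      by (intro sum_mono2) (auto intro: prod_nonneg w0)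
    also have "\<dots> = w a * w b * w c" using Q by simp
    also have "\<dots> \<le> 4/81 * (w a + w b + w c)^3" by (rule tri_ineq) (use w0 in auto)
    also have "w a + w b + w c = sum w Q" using Q by simp
    finally show ?thesis .
  next
    case 3
    obtain S0 where S0: "S0 \<subseteq> Q" "card S0 = 3" "\<not> p S0" using nk[OF 3] by blast
    then obtain a b c where S0e: "S0 = {a, b, c}" "a \<noteq> b" "a \<noteq> c" "b \<noteq> c" by (auto simp: card_3_iff)
    have "card (Q - S0) = 1" using S0 3 fin by (simp add: card_Diff_subset finite_subset)
    then obtain d where d: "Q - S0 = {d}" by (auto simp: card_1_singleton_iff)
    have Q: "Q = {a, b, c, d}" using d S0 S0e by auto
    have dn: "d \<noteq> a" "d \<noteq> b" "d \<noteq> c" using d S0e by auto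
    have sub: "fam p Q \<subseteq> {{a, b, d}, {a, c, d}, {b, c, d}}"
    proof
      fix S assume "S \<in> fam p Q"
      then have S: "S \<subseteq> {a,b,c,d}" "card S = 3" "S \<noteq> {a,b,c}" using S0 S0e Q unfolding fam_def by auto
      have SQ: "S \<subseteq> Q" using S Q by simp
      have "card (Q - S) = 1" using SQ S(2) 3 fin by (simp add: card_Diff_subset finite_subset)
      then obtain e where e: "Q - S = {e}" by (auto simp: card_1_singleton_iff)
      have Se: "S = Q - {e}" using e SQ by blast
      have "e \<in> Q" using e by blast
      moreover have "e \<noteq> d"
      proof
        assume "e = d"
        then have "S = Q - {d}" using Se by simp
        also have "\<dots> = S0" using d S0 by blast
        finally show False using S(3) S0e by simp
      qed
      ultimately have "e = a \<or> e = b \<or> e = c" using Q by blast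
      then show "S \<in> {{a, b, d}, {a, c, d}, {b, c, d}}" using Se Q S0e dn by auto
    qed
    have "FG p Q w \<le> (\<Sum>S\<in>{{a, b, d}, {a, c, d}, {b, c, d}}. \<Prod>z\<in>S. w z)" unfolding FG_def
      by (intro sum_mono2 sub) (auto intro: prod_nonneg w0)
    also have "\<dots> \<le> (\<Prod>z\<in>{a,b,d}. w z) + (\<Prod>z\<in>{a,c,d}. w z) + (\<Prod>z\<in>{b,c,d}. w z)"
      by (rule sum3_le) (auto intro: prod_nonneg w0)
    also have "\<dots> = w d * (w a * w b + w a * w c + w b * w c)" using S0e dn by (simp add: algebra_simps)
    also have "\<dots> \<le> 4/81 * (w a + w b + w c + w d)^3" by (rule star_ineq) (use w0 in auto)
    also have "w a + w b + w c + w d = sum w Q" using Q S0e dn by (simp add: algebra_simps)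
    finally show ?thesis .
  qed
qed




definition dS :: "real \<Rightarrow> real^2 \<Rightarrow> real^2 \<Rightarrow> bool" where
  "dS s x y \<longleftrightarrow> \<bar>dist x y - s\<bar> \<le> s/20000"
definition dL :: "real \<Rightarrow> real^2 \<Rightarrow> real^2 \<Rightarrow> bool" where
  "dL s x y \<longleftrightarrow> \<bar>dist x y - sqrt 3 * s\<bar> \<le> s/20000"
definition tri :: "real \<Rightarrow> (real^2) set \<Rightarrow> bool" where
  "tri s S \<longleftrightarrow> (\<exists>x y z. S = {x, y, z} \<and> dS s x y \<and> dS s x z \<and> dL s y z)"
definition sc :: "real \<Rightarrow> real^2 \<Rightarrow> real^2" where "sc s x = (1/s) *\<^sub>R x"

lemma dist_sc: "s > 0 \<Longrightarrow> dist (sc s x) (sc s y) = dist x y / s"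
  unfolding sc_def dist_norm by (simp add: scaleR_diff_right[symmetric] divide_inverse)

lemma scale_abs: "(s::real) > 0 \<Longrightarrow> (\<bar>(d::real) / s - c\<bar> \<le> 1/20000) = (\<bar>d - c * s\<bar> \<le> s/20000)"
proof -
  assume s: "s > 0"
  have "d / s - c = (d - c * s) / s" using s by (simp add: field_simps)
  then have "\<bar>d / s - c\<bar> = \<bar>d - c * s\<bar> / s" using s by simp
  then show ?thesis using s by (simp add: divide_le_eq mult.commute)
qed

lemma dS_sc: "s > 0 \<Longrightarrow> dS s x y = nS (sc s x) (sc s y)"
  unfolding dS_def nS_def dist_sc using scale_abs[of s "dist x y" 1] by simp
lemma dL_sc: "s > 0 \<Longrightarrow> dL s x y = nL (sc s x) (sc s y)"
  unfolding dL_def nL_def dist_sc using scale_abs[of s "dist x y" "sqrt 3"] by (simp add: mult.commute)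

lemma dS_sym: "dS s x y = dS s y x" unfolding dS_def by (simp add: dist_commute)
lemma dL_sym: "dL s x y = dL s y x" unfolding dL_def by (simp add: dist_commute)
lemma dSL_excl: "s > 0 \<Longrightarrow> dS s x y \<Longrightarrow> dL s x y \<Longrightarrow> False"
  using dS_sc dL_sc nS_nL_excl by metis
lemma dS_irr: "s > 0 \<Longrightarrow> \<not> dS s x x" unfolding dS_def by simp
lemma dL_irr: "s > 0 \<Longrightarrow> \<not> dL s x x" unfolding dL_def using sqrt3_bounds by simp

lemma tri_pair:
  assumes s: "s > 0" and t: "tri s S" and ab: "a \<in> S" "b \<in> S" "a \<noteq> b"
  shows "dS s a b \<or> dL s a b"
proof -
  obtain x y z where S: "S = {x, y, z}" "dS s x y" "dS s x z" "dL s y z" using t unfolding tri_def by blast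
  show ?thesis using S ab dS_sym dL_sym by auto
qed

lemma tri_lab:
  assumes s: "s > 0" and t: "tri s {a, b, c}" and d: "a \<noteq> b" "a \<noteq> c" "b \<noteq> c"
  shows "(dS s a b \<and> dS s a c \<and> \<not> dS s b c) \<or> (dS s a b \<and> \<not> dS s a c \<and> dS s b c) \<or> (\<not> dS s a b \<and> dS s a c \<and> dS s b c)"
proof -
  obtain x y z where S: "{a, b, c} = {x, y, z}" "dS s x y" "dS s x z" "dL s y z" using t unfolding tri_def by blast
  have nyz: "\<not> dS s y z" using S(4) dSL_excl s by blast
  have xy: "x \<noteq> y" "x \<noteq> z" "y \<noteq> z" using S dS_irr dL_irr s by auto
  have hx: "x = a \<or> x = b \<or> x = c" "y = a \<or> y = b \<or> y = c" "z = a \<or> z = b \<or> z = c" using S(1) by blast+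
  have sy: "dS s b a = dS s a b" "dS s c a = dS s a c" "dS s c b = dS s b c" using dS_sym by blast+
  show ?thesis using hx xy S(2,3) nyz sy d by auto
qed

lemma card5_obtain:
  assumes "finite Q" "card Q \<ge> 5"
  obtains a b c d e where "a \<in> Q" "b \<in> Q" "c \<in> Q" "d \<in> Q" "e \<in> Q"
    "a \<noteq> b" "a \<noteq> c" "a \<noteq> d" "a \<noteq> e" "b \<noteq> c" "b \<noteq> d" "b \<noteq> e" "c \<noteq> d" "c \<noteq> e" "d \<noteq> e"
proof -
  obtain B where B: "B \<subseteq> Q" "card B = 5" using obtain_subset_with_card_n[OF assms(2)] by blast
  then have "\<exists>a b c d e. B = {a,b,c,d,e} \<and> a \<noteq> b \<and> a \<noteq> c \<and> a \<noteq> d \<and> a \<noteq> e \<and> b \<noteq> c \<and> b \<noteq> d \<and> b \<noteq> e \<and> c \<noteq> d \<and> c \<noteq> e \<and> d \<noteq> e"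
    by (simp add: numeral_eq_Suc card_Suc_eq) blast
  then show ?thesis using that B by blast
qed

lemma comb_bound:
  fixes s :: real assumes s: "s > 0"
  shows "finite Q \<Longrightarrow> (\<And>x. 0 \<le> w x) \<Longrightarrow> FG (tri s) Q w \<le> 4/81 * (sum w Q)^3"
proof (induction "card Q" arbitrary: Q w rule: less_induct)
  case less
  note fin = less.prems(1) and w0 = less.prems(2)
  show ?case
  proof (cases "\<exists>x\<in>Q. \<exists>y\<in>Q. x \<noteq> y \<and> \<not> (\<exists>S\<in>fam (tri s) Q. x \<in> S \<and> y \<in> S)")
    case True
    then obtain x y where xy: "x \<in> Q" "y \<in> Q" "x \<noteq> y" "\<not> (\<exists>S\<in>fam (tri s) Q. x \<in> S \<and> y \<in> S)" by blast
    define w1 where "w1 = w(x := w x + w y)"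
    define w2 where "w2 = w(y := w x + w y)"
    have w10: "\<And>z. 0 \<le> w1 z" "\<And>z. 0 \<le> w2 z" unfolding w1_def w2_def using w0 by (auto simp: add_nonneg_nonneg)
    have c1: "card (Q - {y}) < card Q" "card (Q - {x}) < card Q" using card_Diff1_less[OF fin xy(2)] card_Diff1_less[OF fin xy(1)] by auto
    have IH1: "FG (tri s) (Q - {y}) w1 \<le> 4/81 * (sum w1 (Q - {y}))^3"
      by (rule less.hyps[OF c1(1)]) (use fin w10 in auto)
    have IH2: "FG (tri s) (Q - {x}) w2 \<le> 4/81 * (sum w2 (Q - {x}))^3"
      by (rule less.hyps[OF c1(2)]) (use fin w10 in auto)
    have sw1: "sum w1 (Q - {y}) = sum w Q"
    proof -
      have "sum w1 (Q - {y}) = w1 x + sum w1 (Q - {y} - {x})" using fin xy by (simp add: sum.remove)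
      also have "sum w1 (Q - {y} - {x}) = sum w (Q - {y} - {x})" by (rule sum.cong) (auto simp: w1_def)
      also have "sum w Q = w y + (w x + sum w (Q - {y} - {x}))"
        using sum.remove[OF fin xy(2), of w] sum.remove[of "Q - {y}" x w] fin xy by simp
      ultimately show ?thesis by (simp add: w1_def)
    qed
    have sw2: "sum w2 (Q - {x}) = sum w Q"
    proof -
      have "sum w2 (Q - {x}) = w2 y + sum w2 (Q - {x} - {y})" using fin xy by (simp add: sum.remove)
      also have "sum w2 (Q - {x} - {y}) = sum w (Q - {x} - {y})" by (rule sum.cong) (auto simp: w2_def)
      also have "sum w Q = w x + (w y + sum w (Q - {x} - {y}))"
        using sum.remove[OF fin xy(1), of w] sum.remove[of "Q - {x}" y w] fin xy by simp
      ultimately show ?thesis using xy by (simp add: w2_def)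
    qed
    have "FG (tri s) Q w \<le> max (FG (tri s) (Q - {y}) w1) (FG (tri s) (Q - {x}) w2)"
      unfolding w1_def w2_def by (rule shift[OF fin xy(1-3) xy(4) w0])
    then show ?thesis using IH1 IH2 sw1 sw2 by simp
  next
    case False
    then have cov: "\<And>x y. x \<in> Q \<Longrightarrow> y \<in> Q \<Longrightarrow> x \<noteq> y \<Longrightarrow> \<exists>S\<in>fam (tri s) Q. x \<in> S \<and> y \<in> S" by blast
    have P: "\<And>x y. x \<in> Q \<Longrightarrow> y \<in> Q \<Longrightarrow> x \<noteq> y \<Longrightarrow> nS (sc s x) (sc s y) \<or> nL (sc s x) (sc s y)"
    proof -
      fix x y assume "x \<in> Q" "y \<in> Q" "x \<noteq> y"
      then obtain S where "S \<in> fam (tri s) Q" "x \<in> S" "y \<in> S" using cov by blast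
      then have "dS s x y \<or> dL s x y" using tri_pair[OF s] \<open>x \<noteq> y\<close> unfolding fam_def by blast
      then show "nS (sc s x) (sc s y) \<or> nL (sc s x) (sc s y)" using dS_sc[OF s] dL_sc[OF s] by simp
    qed
    have c4: "card Q \<le> 4"
    proof (rule ccontr)
      assume "\<not> card Q \<le> 4"
      then have c5: "card Q \<ge> 5" by simp
      obtain a b c d e where m: "a \<in> Q" "b \<in> Q" "c \<in> Q" "d \<in> Q" "e \<in> Q" and n: 
        "a \<noteq> b" "a \<noteq> c" "a \<noteq> d" "a \<noteq> e" "b \<noteq> c" "b \<noteq> d" "b \<noteq> e" "c \<noteq> d" "c \<noteq> e" "d \<noteq> e"
        by (rule card5_obtain[OF fin c5])
      show False by (rule five[OF P[OF m(1) m(2) n(1)] P[OF m(1) m(3) n(2)] P[OF m(1) m(4) n(3)] P[OF m(1) m(5) n(4)] P[OF m(2) m(3) n(5)] P[OF m(2) m(4) n(6)] P[OF m(2) m(5) n(7)] P[OF m(3) m(4) n(8)] P[OF m(3) m(5) n(9)] P[OF m(4) m(5) n(10)]])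
    qed
    have nk: "\<exists>S. S \<subseteq> Q \<and> card S = 3 \<and> \<not> tri s S" if c4': "card Q = 4"
    proof (rule ccontr)
      assume nt: "\<not> (\<exists>S. S \<subseteq> Q \<and> card S = 3 \<and> \<not> tri s S)"
      obtain a b c d where Q: "Q = {a,b,c,d}" and dd: "a \<noteq> b" "a \<noteq> c" "a \<noteq> d" "b \<noteq> c" "b \<noteq> d" "c \<noteq> d"
        using c4' by (simp add: numeral_eq_Suc card_Suc_eq) blast
      have t: "tri s {a,b,c}" "tri s {a,b,d}" "tri s {a,c,d}" "tri s {b,c,d}"
        using nt Q dd by (auto simp: card_insert_if)
      have cm: "cm_ok (dS s a b) (dS s a c) (dS s a d) (dS s b c) (dS s b d) (dS s c d)"
        unfolding dS_sc[OF s] by (rule four) (use P Q dd in auto)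
      show False using tri_lab[OF s t(1)] tri_lab[OF s t(2)] tri_lab[OF s t(3)] tri_lab[OF s t(4)] cm dd
        unfolding cm_ok_def by auto
    qed
    show ?thesis by (rule base_bound[OF fin c4 w0 nk]) 
  qed
qed


lemma angle_cos:
  assumes "A \<noteq> B" "A \<noteq> C" "angle_deg A B C = t"
  shows "(B - A) \<bullet> (C - A) = cos (t * pi / 180) * (norm (B - A) * norm (C - A))"
proof -
  define q where "q = ((B - A) \<bullet> (C - A)) / (norm (B - A) * norm (C - A))"
  have np: "norm (B - A) * norm (C - A) > 0" using assms by auto
  have cs: "\<bar>(B - A) \<bullet> (C - A)\<bar> \<le> norm (B - A) * norm (C - A)" by (rule Cauchy_Schwarz_ineq2)
  have q1: "-1 \<le> q" "q \<le> 1" unfolding q_def using np cs by (auto simp: abs_le_iff divide_le_eq le_divide_eq)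
  have "arccos q * 180 / pi = t" using assms(3) unfolding angle_deg_def q_def by simp
  then have "arccos q = t * pi / 180" by (simp add: field_simps)
  then have "cos (t * pi / 180) = q" using q1 by (metis cos_arccos)
  then show ?thesis unfolding q_def using np by (simp add: field_simps)
qed

lemma apex:
  fixes A B C :: "real^2"
  assumes nc: "\<not> collinear {A, B, C}" and a1: "angle_deg A B C = 120" and a2: "angle_deg B C A = 30"
  shows "dist A C = dist A B \<and> dist B C = sqrt 3 * dist A B"
proof -
  have ne: "A \<noteq> B" "A \<noteq> C" "B \<noteq> C" using nc by (auto simp: collinear_2 insert_commute)
  define u where "u = B - A"
  define v where "v = C - A"
  define p where "p = norm u"
  define q where "q = norm v"
  define r where "r = norm (v - u)"
  have pq: "p > 0" "q > 0" "r \<ge> 0" using ne unfolding p_def q_def r_def u_def v_def by auto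
  have c120: "cos (120 * pi / 180) = -1/2" using cos_120 by (simp add: field_simps)
  have c30: "cos (30 * pi / 180) = sqrt 3 / 2" using cos_30 by (simp add: field_simps)
  have E1: "u \<bullet> v = -1/2 * (p * q)" using angle_cos[OF ne(1) ne(2) a1] c120 unfolding u_def v_def p_def q_def by simp
  have "(C - B) \<bullet> (A - B) = sqrt 3 / 2 * (norm (C - B) * norm (A - B))"
    using angle_cos[OF ne(3) ne(1)[symmetric] a2] c30 by simp
  moreover have "C - B = v - u" "A - B = - u" unfolding u_def v_def by auto
  ultimately have E2: "(v - u) \<bullet> (- u) = sqrt 3 / 2 * (r * p)" unfolding r_def p_def by simp
  have uu: "u \<bullet> u = p^2" unfolding p_def by (simp add: power2_norm_eq_inner)
  have vv: "v \<bullet> v = q^2" unfolding q_def by (simp add: power2_norm_eq_inner)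
  have E3: "r^2 = p^2 + q^2 - 2 * (u \<bullet> v)" unfolding r_def power2_norm_eq_inner
    using uu vv by (simp add: inner_diff inner_commute algebra_simps)
  have E2': "p^2 + p * q / 2 = sqrt 3 / 2 * (r * p)" using E2 E1 uu inner_commute[of v u] by (simp add: inner_diff algebra_simps)
  have E4: "p + q / 2 = sqrt 3 / 2 * r"
  proof -
    have "p * (p + q / 2) = p * (sqrt 3 / 2 * r)" using E2' by (simp add: power2_eq_square algebra_simps)
    then show ?thesis using pq by simp
  qed
  have s3: "sqrt 3 ^ 2 = (3::real)" by simp
  have "(p + q/2)^2 = 3/4 * r^2" unfolding E4 by (simp add: power_mult_distrib power_divide s3)
  then have h: "(p + q/2)^2 = 3/4 * (p^2 + q^2 + p * q)" using E3 E1 by simp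
  have "(p - q) * (p + 2 * q) = 4 * ((p + q/2)^2 - 3/4 * (p^2 + q^2 + p * q))"
    by (simp add: power2_eq_square field_simps)
  also have "\<dots> = 0" using h by simp
  finally have "(p - q) * (p + 2 * q) = 0" .
  then have pq_eq: "p = q" using pq by simp
  have "r^2 = 3 * p^2" using E3 E1 pq_eq by (simp add: power2_eq_square)
  then have "sqrt (3 * p^2) = r" using pq by (intro real_sqrt_unique) auto
  moreover have "sqrt (3 * p^2) = sqrt 3 * p" using pq by (simp add: real_sqrt_mult)
  ultimately have "r = sqrt 3 * p" by simp
  moreover have "dist A C = q" "dist A B = p" "dist B C = r"
    unfolding q_def p_def r_def u_def v_def dist_norm by (auto simp: norm_minus_commute)
  ultimately show ?thesis using pq_eq by simp
qed

lemma mset3: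
  fixes x y z :: real
  assumes "{#x, y, z#} = {#120, 30, 30#}"
  shows "(x = 120 \<and> y = 30 \<and> z = 30) \<or> (x = 30 \<and> y = 120 \<and> z = 30) \<or> (x = 30 \<and> y = 30 \<and> z = 120)"
proof -
  have c: "count {#x, y, z#} 120 = 1" "count {#x, y, z#} 30 = 2" using assms by simp_all
  then show ?thesis by (auto split: if_splits)
qed

lemma tri_type_sides:
  assumes "tri_type (A0, B0, C0) 120 30 30"
  shows "\<exists>s>0. (dist A0 B0 = s \<and> dist C0 A0 = s \<and> dist B0 C0 = sqrt 3 * s) \<or>
               (dist A0 B0 = s \<and> dist B0 C0 = s \<and> dist C0 A0 = sqrt 3 * s) \<or>
               (dist B0 C0 = s \<and> dist C0 A0 = s \<and> dist A0 B0 = sqrt 3 * s)"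
proof -
  have nc: "\<not> collinear {A0, B0, C0}" and ms: "{#angle_deg A0 B0 C0, angle_deg B0 C0 A0, angle_deg C0 A0 B0#} = {#120, 30, 30#}"
    using assms unfolding tri_type_def by auto
  have nc2: "\<not> collinear {B0, C0, A0}" "\<not> collinear {C0, A0, B0}" using nc by (auto simp: insert_commute)
  have ne: "A0 \<noteq> B0" "B0 \<noteq> C0" "C0 \<noteq> A0" using nc by (auto simp: collinear_2 insert_commute)
  consider "angle_deg A0 B0 C0 = 120" "angle_deg B0 C0 A0 = 30" "angle_deg C0 A0 B0 = 30"
    | "angle_deg A0 B0 C0 = 30" "angle_deg B0 C0 A0 = 120" "angle_deg C0 A0 B0 = 30"
    | "angle_deg A0 B0 C0 = 30" "angle_deg B0 C0 A0 = 30" "angle_deg C0 A0 B0 = 120"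
    using mset3[OF ms] by blast
  then show ?thesis
  proof cases
    case 1
    from apex[OF nc 1(1) 1(2)] show ?thesis using ne
      by (intro exI[of _ "dist A0 B0"]) (auto simp: dist_commute)
  next
    case 2
    from apex[OF nc2(1) 2(2) 2(3)] show ?thesis using ne
      by (intro exI[of _ "dist B0 C0"]) (auto simp: dist_commute)
  next
    case 3
    from apex[OF nc2(2) 3(3) 3(1)] show ?thesis using ne
      by (intro exI[of _ "dist C0 A0"]) (auto simp: dist_commute)
  qed
qed

lemma dist_approx: "\<bar>dist a' b' - dist a b\<bar> \<le> dist a' a + dist b' b"
proof -
  have "dist a' b' \<le> dist a' a + dist a b + dist b b'" using dist_triangle[of a' b' a] dist_triangle[of a b' b] by linarith
  moreover have "dist a b \<le> dist a a' + dist a' b' + dist b' b" using dist_triangle[of a b a'] dist_triangle[of a' b b'] by linarith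
  ultimately show ?thesis by (simp add: abs_le_iff dist_commute)
qed

lemma card_fam_FG: "finite P \<Longrightarrow> real (card (fam p P)) = FG p P (\<lambda>_. 1)"
  unfolding FG_def by simp


theorem lemma3p5:
  fixes T :: triangle and n :: nat
  assumes "tri_type T 120 30 30"
    and "n > 0"
  shows "real (h n T) \<le> 4 / 81 * real n ^ 3"
proof -
  obtain A0 B0 C0 where T: "T = (A0, B0, C0)" by (cases T) auto
  obtain s where s: "s > 0" and sides:
    "(dist A0 B0 = s \<and> dist C0 A0 = s \<and> dist B0 C0 = sqrt 3 * s) \<or>
     (dist A0 B0 = s \<and> dist B0 C0 = s \<and> dist C0 A0 = sqrt 3 * s) \<or>
     (dist B0 C0 = s \<and> dist C0 A0 = s \<and> dist A0 B0 = sqrt 3 * s)"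
    using tri_type_sides[of A0 B0 C0] assms(1) T by auto
  have s3: "s \<le> sqrt 3 * s" using s sqrt3_bounds by simp
  have mm: "min (sqrt 3 * s) (min s s) = s" "min s (min (sqrt 3 * s) s) = s" "min s (min s (sqrt 3 * s)) = s"
    using s3 by (simp_all add: min_absorb2 min_absorb1)
  have ms: "min_side T = s" using sides unfolding min_side_def T by (elim disjE) (simp_all only: mm prod.case)
  define \<epsilon> :: real where "\<epsilon> = 1/40000"
  have tri_of: "tri s {A', B', C'}" if ec: "eps_congruent \<epsilon> A' B' C' T" for A' B' C'
  proof -
    obtain A B C where cg: "congruent_to A B C T" and d: "dist A' A \<le> \<epsilon> * min_side T"
      "dist B' B \<le> \<epsilon> * min_side T" "dist C' C \<le> \<epsilon> * min_side T"
      using ec unfolding eps_congruent_def by blast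
    have cd: "dist A B = dist A0 B0" "dist B C = dist B0 C0" "dist C A = dist C0 A0"
      using cg unfolding congruent_to_def T by auto
    have e: "dist A' A \<le> s/40000" "dist B' B \<le> s/40000" "dist C' C \<le> s/40000"
      using d unfolding ms \<epsilon>_def by auto
    have ab: "\<bar>dist A' B' - dist A0 B0\<bar> \<le> s/20000" using dist_approx[of A' B' A B] cd e by linarith
    have bc: "\<bar>dist B' C' - dist B0 C0\<bar> \<le> s/20000" using dist_approx[of B' C' B C] cd e by linarith
    have ca: "\<bar>dist C' A' - dist C0 A0\<bar> \<le> s/20000" using dist_approx[of C' A' C A] cd e by linarith
    have ab': "\<bar>dist B' A' - dist A0 B0\<bar> \<le> s/20000" using ab by (simp add: dist_commute)
    have bc': "\<bar>dist C' B' - dist B0 C0\<bar> \<le> s/20000" using bc by (simp add: dist_commute)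
    have ca': "\<bar>dist A' C' - dist C0 A0\<bar> \<le> s/20000" using ca by (simp add: dist_commute)
    consider "dist A0 B0 = s" "dist C0 A0 = s" "dist B0 C0 = sqrt 3 * s"
      | "dist A0 B0 = s" "dist B0 C0 = s" "dist C0 A0 = sqrt 3 * s"
      | "dist B0 C0 = s" "dist C0 A0 = s" "dist A0 B0 = sqrt 3 * s" using sides by blast
    then show ?thesis
    proof cases
      case 1
      have "dS s A' B'" "dS s A' C'" "dL s B' C'" unfolding dS_def dL_def using ab ca' bc 1 by auto
      then show ?thesis unfolding tri_def by blast
    next
      case 2
      have "dS s B' A'" "dS s B' C'" "dL s A' C'" unfolding dS_def dL_def using ab' bc ca' 2 by auto
      then have "tri s {B', A', C'}" unfolding tri_def by blast
      then show ?thesis by (simp add: insert_commute)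
    next
      case 3
      have "dS s C' A'" "dS s C' B'" "dL s A' B'" unfolding dS_def dL_def using ca bc' ab 3 by auto
      then have "tri s {C', A', B'}" unfolding tri_def by blast
      then show ?thesis by (simp add: insert_commute)
    qed
  qed
  have cnt: "real (count_eps T \<epsilon> P) \<le> 4/81 * real (card P)^3" if fP: "finite P" for P
  proof -
    have sub: "{S. S \<subseteq> P \<and> card S = 3 \<and> (\<exists>A' B' C'. S = {A', B', C'} \<and> eps_congruent \<epsilon> A' B' C' T)} \<subseteq> fam (tri s) P"
      unfolding fam_def using tri_of by blast
    have "count_eps T \<epsilon> P \<le> card (fam (tri s) P)" unfolding count_eps_def
      by (rule card_mono[OF fam_finite[OF fP] sub])
    then have "real (count_eps T \<epsilon> P) \<le> FG (tri s) P (\<lambda>_. 1)" unfolding card_fam_FG[OF fP, symmetric] by simp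
    also have "\<dots> \<le> 4/81 * (sum (\<lambda>_. 1) P)^3" by (rule comb_bound[OF s fP]) simp
    finally show ?thesis by simp
  qed
  define Y where "Y = {count_eps T \<epsilon> P | P. finite P \<and> card P = n}"
  have inf: "infinite (UNIV :: (real^2) set)" by (rule infinite_UNIV_vec) (rule infinite_UNIV_char_0)
  obtain P0 :: "(real^2) set" where "finite P0" "card P0 = n" using infinite_arbitrarily_large[OF inf] by blast
  then have Yne: "Y \<noteq> {}" unfolding Y_def by blast
  have Ybd: "\<And>c. c \<in> Y \<Longrightarrow> real c \<le> 4/81 * real n^3" using cnt unfolding Y_def by auto
  have "Y \<subseteq> {..nat \<lceil>4/81 * real n^3\<rceil>}"
  proof
    fix c assume "c \<in> Y"
    then have "real c \<le> 4/81 * real n^3" by (rule Ybd)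
    then have "real c \<le> real (nat \<lceil>4/81 * real n^3\<rceil>)" by linarith
    then show "c \<in> {..nat \<lceil>4/81 * real n^3\<rceil>}" by simp
  qed
  then have Yfin: "finite Y" by (rule finite_subset) simp
  have "Max Y \<in> Y" by (rule Max_in[OF Yfin Yne])
  then have he: "real (h_eps n T \<epsilon>) \<le> 4/81 * real n ^ 3" unfolding h_eps_def Y_def[symmetric] by (rule Ybd)
  have "h n T \<le> h_eps n T \<epsilon>" unfolding h_def by (rule cInf_lower) (auto simp: \<epsilon>_def)
  then have "real (h n T) \<le> real (h_eps n T \<epsilon>)" by simp
  then show ?thesis using he by linarith
qed


end
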